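(* Let the data $(I,1,c,\{h_a\},S,\{d_a\},\{\chi_a\})$ be as in the context, and fix an integer $n\ge 1$. For $x,y>0$ define $$\mathcal{T}_1(n;x,y)=\frac{\chi_1\!\left(ix+\tfrac1n\right)\,\chi_1\!\left(iy-\tfrac1n\right)}{\chi_1(ix)\,\chi_1(iy)} .$$ Assume $\sum_{a\in I} d_a^2\theta_a^n\neq 0$. Then, as $x\to\infty$ and $y\to 0^+$ (independently), $\mathcal{T}_1(n;x,y)\neq 0$ for all sufficiently large $x$ and small $y$, and $$\frac{\mathcal{T}_1(n;x,y)}{|\mathcal{T}_1(n;x,y)|}\;\longrightarrow\; e^{-2\pi i\left(\frac{2}{n}+n\right)\frac{c}{24}}\;\zeta_n,\qquad \zeta_n:=\frac{\sum_{a} d_a^2\theta_a^n}{\bigl|\sum_a d_a^2\theta_a^n\bigr|}.$$ In other words, $\mathcal{T}_1(n;x,y)$ is asymptotically a positive real multiple of $e^{-2\pi i(\frac2n+n)\frac{c}{24}}\sum_a d_a^2\theta_a^n$.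
   Context: Physical interpretation (not needed for the mathematics): $\mathcal{T}_1$ models the expectation value of rotating half of a cylinder by angle $2\pi/n$, with $x=\xi_l/L$, $y=\xi_r/L$. Data: $I$ is a finite index set with a distinguished element $1$. $c\in\mathbb{R}$. Real numbers $h_a$ ($a\in I$) with $h_1=0$ and $h_a>0$ for $a\neq 1$; set $\theta_a=e^{2\pi i h_a}$. Positive reals $d_a$ ($a\in I$) and $\mathcal{D}=\sqrt{\sum_a d_a^2}$. $S=(S_{ab})_{a,b\in I}$ is a complex matrix with $S_{a1}=S_{1a}=d_a/\mathcal{D}$ for all $a$. $T$ is the diagonal matrix $T_{ab}=\delta_{ab}e^{2\pi i(h_a-c/24)}$. The functions $\chi_a$ ($a\in I$) are holomorphic on the upper half-plane $\mathbb{H}$ and have absolutely convergent expansions $\chi_a(\tau)=\sum_{k\ge 0}N_{a,k}\,e^{2\pi i\tau(h_a-c/24+k)}$ with nonnegative integers $N_{a,k}$, $N_{a,0}\ge1$ and $N_{1,0}=1$; they satisfy the modular covariance $\chi_a(-1/\tau)=\sum_b S_{ab}\chi_b(\tau)$ and $\chi_a(\tau+1)=e^{2\pi i(h_a-c/24)}\chi_a(\tau)$ for all $\tau\in\mathbb{H}$. *)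

theory Defs
  imports "HOL-Complex_Analysis.Complex_Analysis"
begin

definition T1 :: "(complex \<Rightarrow> complex) \<Rightarrow> nat \<Rightarrow> real \<Rightarrow> real \<Rightarrow> complex" where
  "T1 chi1 n x y =
     chi1 (\<i> * of_real x + 1 / of_nat n) * chi1 (\<i> * of_real y - 1 / of_nat n)
     / (chi1 (\<i> * of_real x) * chi1 (\<i> * of_real y))"

definition phase :: "complex \<Rightarrow> complex" where
  "phase z = z / complex_of_real (cmod z)"

definition theta :: "real \<Rightarrow> complex" where
  "theta ha = exp (2 * pi * \<i> * complex_of_real ha)"

end

theory Submission
  imports Defs "HOL-Real_Asymp.Real_Asymp"
begin

lemma qexp_limit:
  fixes chi :: "complex \<Rightarrow> complex" and N :: "nat \<Rightarrow> nat" and e :: real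
  assumes ab: "\<And>\<tau>. Im \<tau> > 0 \<Longrightarrow>
        summable (\<lambda>k. norm (of_nat (N k) * exp (2 * pi * \<i> * \<tau> * complex_of_real (e + real k))))"
    and ex: "\<And>\<tau>. Im \<tau> > 0 \<Longrightarrow>
        (\<lambda>k. of_nat (N k) * exp (2 * pi * \<i> * \<tau> * complex_of_real (e + real k))) sums chi \<tau>"
    and lim: "filterlim (\<lambda>p. Im (\<tau> p)) at_top F"
  shows "((\<lambda>p. chi (\<tau> p) * exp (- (2 * pi * \<i> * \<tau> p * complex_of_real e))) \<longlongrightarrow> of_nat (N 0)) F"
proof -
  define P where "P = (\<lambda>w::complex. \<Sum>k. of_nat (N k) * w ^ k)"
  have key: "chi t * exp (- (2 * pi * \<i> * t * complex_of_real e)) = P (exp (2 * pi * \<i> * t))"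
    if "Im t > 0" for t
  proof -
    have "(\<lambda>k. of_nat (N k) * exp (2 * pi * \<i> * t * complex_of_real (e + real k))
        * exp (- (2 * pi * \<i> * t * complex_of_real e))) sums
        (chi t * exp (- (2 * pi * \<i> * t * complex_of_real e)))"
      by (rule sums_mult2[OF ex[OF that]])
    note sm = this
    have id: "of_nat (N k) * exp (2 * pi * \<i> * t * complex_of_real (e + real k))
        * exp (- (2 * pi * \<i> * t * complex_of_real e)) = of_nat (N k) * exp (2 * pi * \<i> * t) ^ k" for k
    proof -
      have "exp (2 * pi * \<i> * t * complex_of_real (e + real k))
        * exp (- (2 * pi * \<i> * t * complex_of_real e)) = exp (of_nat k * (2 * pi * \<i> * t))"
        by (simp add: exp_add[symmetric] algebra_simps)
      then show ?thesis by (simp add: exp_of_nat_mult mult.assoc)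
    qed
    from sm have "(\<lambda>k. of_nat (N k) * exp (2 * pi * \<i> * t) ^ k) sums
        (chi t * exp (- (2 * pi * \<i> * t * complex_of_real e)))" by (simp only: id)
    then show ?thesis unfolding P_def by (simp add: sums_iff)
  qed
  have summ: "summable (\<lambda>k. of_nat (N k) * (complex_of_real (exp (-2*pi))) ^ k)"
  proof -
    have s: "summable (\<lambda>k. norm (of_nat (N k) * exp (2 * pi * \<i> * \<i> * complex_of_real (e + real k))))"
      using ab[of \<i>] by simp
    have "norm (of_nat (N k) * exp (2 * pi * \<i> * \<i> * complex_of_real (e + real k)))
       = exp (-2*pi*e) * norm (of_nat (N k) * (complex_of_real (exp (-2*pi))) ^ k)" for k
      by (simp add: norm_mult norm_power exp_add[symmetric] exp_of_nat_mult[symmetric] algebra_simps)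
    then have "summable (\<lambda>k. exp (-2*pi*e) * norm (of_nat (N k) * (complex_of_real (exp (-2*pi))) ^ k))"
      using s by simp
    then have "summable (\<lambda>k. norm (of_nat (N k) * (complex_of_real (exp (-2*pi))) ^ k))"
      by (subst (asm) summable_cmult_iff) simp
    then show ?thesis by (rule summable_norm_cancel)
  qed
  have cont: "isCont P 0" unfolding P_def
    by (rule isCont_powser[OF summ]) simp
  have q0: "((\<lambda>p. exp (2 * pi * \<i> * \<tau> p)) \<longlongrightarrow> 0) F"
  proof -
    have "((\<lambda>t. exp (-2*pi*t)) \<longlongrightarrow> 0) at_top" by real_asymp
    then have "((\<lambda>p. exp (-2*pi*Im (\<tau> p))) \<longlongrightarrow> 0) F"
      using filterlim_compose[OF _ lim] by blast
    then show ?thesis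
      by (subst tendsto_norm_zero_iff[symmetric]) simp
  qed
  have "((\<lambda>p. P (exp (2 * pi * \<i> * \<tau> p))) \<longlongrightarrow> P 0) F"
    using isCont_tendsto_compose[OF cont q0] .
  moreover have "P 0 = of_nat (N 0)" unfolding P_def using powser_zero[of "\<lambda>k. of_nat (N k) :: complex"] by simp
  moreover have "\<forall>\<^sub>F p in F. Im (\<tau> p) > 0"
    using lim by (simp add: filterlim_at_top_dense)
  ultimately show ?thesis
  proof -
    assume a1: "((\<lambda>p. P (exp (2 * pi * \<i> * \<tau> p))) \<longlongrightarrow> P 0) F" and a2: "P 0 = of_nat (N 0)"
      and a3: "\<forall>\<^sub>F p in F. Im (\<tau> p) > 0"
    have "\<forall>\<^sub>F p in F. P (exp (2 * pi * \<i> * \<tau> p)) = chi (\<tau> p) * exp (- (2 * pi * \<i> * \<tau> p * complex_of_real e))"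
      using a3 by eventually_elim (rule key[symmetric])
    from Lim_transform_eventually[OF a1 this] a2 show ?thesis by simp
  qed
qed

lemma qexp_limit_zero:
  fixes chi :: "complex \<Rightarrow> complex" and N :: "nat \<Rightarrow> nat" and e e1 :: real
  assumes ab: "\<And>\<tau>. Im \<tau> > 0 \<Longrightarrow>
        summable (\<lambda>k. norm (of_nat (N k) * exp (2 * pi * \<i> * \<tau> * complex_of_real (e + real k))))"
    and ex: "\<And>\<tau>. Im \<tau> > 0 \<Longrightarrow>
        (\<lambda>k. of_nat (N k) * exp (2 * pi * \<i> * \<tau> * complex_of_real (e + real k))) sums chi \<tau>"
    and lim: "filterlim (\<lambda>p. Im (\<tau> p)) at_top F"
    and lt: "e1 < e"
  shows "((\<lambda>p. chi (\<tau> p) * exp (- (2 * pi * \<i> * \<tau> p * complex_of_real e1))) \<longlongrightarrow> 0) F"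
proof -
  have A: "((\<lambda>p. chi (\<tau> p) * exp (- (2 * pi * \<i> * \<tau> p * complex_of_real e))) \<longlongrightarrow> of_nat (N 0)) F"
    by (rule qexp_limit[OF ab ex lim])
  have B: "((\<lambda>p. exp (2 * pi * \<i> * \<tau> p * complex_of_real (e - e1))) \<longlongrightarrow> 0) F"
  proof -
    have "((\<lambda>t. exp (-(2*pi*(e-e1))*t)) \<longlongrightarrow> 0) at_top"
      using lt by real_asymp
    then have "((\<lambda>p. exp (-(2*pi*(e-e1))*Im (\<tau> p))) \<longlongrightarrow> 0) F"
      using filterlim_compose[OF _ lim] by blast
    then show ?thesis
      by (subst tendsto_norm_zero_iff[symmetric]) (simp add: algebra_simps)
  qed
  have "((\<lambda>p. chi (\<tau> p) * exp (- (2 * pi * \<i> * \<tau> p * complex_of_real e)) *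
      exp (2 * pi * \<i> * \<tau> p * complex_of_real (e - e1))) \<longlongrightarrow> of_nat (N 0) * 0) F"
    by (rule tendsto_mult[OF A B])
  moreover have eq: "chi t * exp (- (2 * pi * \<i> * t * complex_of_real e)) *
      exp (2 * pi * \<i> * t * complex_of_real (e - e1)) = chi t * exp (- (2 * pi * \<i> * t * complex_of_real e1))" for t
    by (simp add: mult.assoc exp_add[symmetric] algebra_simps)
  ultimately show ?thesis by (simp only: eq mult_zero_right)
qed

lemma T_iter:
  fixes chi :: "complex \<Rightarrow> complex" and z :: complex
  assumes T: "\<And>\<tau>. Im \<tau> > 0 \<Longrightarrow> chi (\<tau> + 1) = z * chi \<tau>"
    and t: "Im t > 0"
  shows "chi (t + of_nat k) = z ^ k * chi t"
proof (induction k)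
  case 0 then show ?case by simp
next
  case (Suc k)
  have "chi (t + of_nat (Suc k)) = chi ((t + of_nat k) + 1)" by (simp add: algebra_simps)
  also have "\<dots> = z * chi (t + of_nat k)" using T t by simp
  finally show ?case using Suc by simp
qed

lemma phase_scale:
  assumes "r > 0" "cmod \<alpha> = 1"
  shows "phase (\<alpha> * s * complex_of_real r) = \<alpha> * phase s"
  using assms by (simp add: phase_def norm_mult)

lemma phase_tendsto:
  assumes "(f \<longlongrightarrow> L) F" "L \<noteq> 0"
  shows "((\<lambda>p. phase (f p)) \<longlongrightarrow> phase L) F"
  unfolding phase_def
  using assms by (intro tendsto_intros) auto

lemma phase_real_pos:
  assumes "r > 0" shows "phase (s * complex_of_real r) = phase s"
  using phase_scale[OF assms, of 1 s] by simp

lemma Im_neg_inv_pos: "Im u > 0 \<Longrightarrow> Im (-1/u) > 0"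
proof -
  assume a: "Im u > 0"
  have "(Re u)\<^sup>2 + (Im u)\<^sup>2 > 0" using a by (simp add: add_nonneg_pos)
  then show ?thesis using a by (simp add: Im_divide)
qed


theorem mainTheorem1:
  fixes I :: "'i set" and one :: 'i and c :: real
    and h d :: "'i \<Rightarrow> real" and S :: "'i \<Rightarrow> 'i \<Rightarrow> complex"
    and chi :: "'i \<Rightarrow> complex \<Rightarrow> complex" and N :: "'i \<Rightarrow> nat \<Rightarrow> nat"
    and n :: nat
  assumes finI: "finite I" and oneI: "one \<in> I"
    and h_one: "h one = 0" and h_pos: "\<And>a. a \<in> I \<Longrightarrow> a \<noteq> one \<Longrightarrow> h a > 0"
    and d_pos: "\<And>a. a \<in> I \<Longrightarrow> d a > 0"
    and S_col: "\<And>a. a \<in> I \<Longrightarrow> S a one = complex_of_real (d a / sqrt (\<Sum>b\<in>I. (d b)\<^sup>2))"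
    and S_row: "\<And>a. a \<in> I \<Longrightarrow> S one a = complex_of_real (d a / sqrt (\<Sum>b\<in>I. (d b)\<^sup>2))"
    and chi_holo: "\<And>a. a \<in> I \<Longrightarrow> chi a holomorphic_on {z. Im z > 0}"
    and chi_abs: "\<And>a \<tau>. a \<in> I \<Longrightarrow> Im \<tau> > 0 \<Longrightarrow>
        summable (\<lambda>k. norm (of_nat (N a k) * exp (2 * pi * \<i> * \<tau> * complex_of_real (h a - c / 24 + real k))))"
    and chi_exp: "\<And>a \<tau>. a \<in> I \<Longrightarrow> Im \<tau> > 0 \<Longrightarrow>
        (\<lambda>k. of_nat (N a k) * exp (2 * pi * \<i> * \<tau> * complex_of_real (h a - c / 24 + real k))) sums chi a \<tau>"
    and N0: "\<And>a. a \<in> I \<Longrightarrow> N a 0 \<ge> 1" and N_one0: "N one 0 = 1"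
    and S_trans: "\<And>a \<tau>. a \<in> I \<Longrightarrow> Im \<tau> > 0 \<Longrightarrow> chi a (- 1 / \<tau>) = (\<Sum>b\<in>I. S a b * chi b \<tau>)"
    and T_trans: "\<And>a \<tau>. a \<in> I \<Longrightarrow> Im \<tau> > 0 \<Longrightarrow>
        chi a (\<tau> + 1) = exp (2 * pi * \<i> * complex_of_real (h a - c / 24)) * chi a \<tau>"
    and n_pos: "n \<ge> 1"
    and nonzero: "(\<Sum>a\<in>I. complex_of_real ((d a)\<^sup>2) * theta (h a) ^ n) \<noteq> 0"
  shows "(\<forall>\<^sub>F p in at_top \<times>\<^sub>F at_right 0. T1 (chi one) n (fst p) (snd p) \<noteq> 0) \<and>
    ((\<lambda>p. phase (T1 (chi one) n (fst p) (snd p))) \<longlongrightarrow>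
       exp (- 2 * pi * \<i> * complex_of_real ((2 / real n + real n) * c / 24))
         * phase (\<Sum>a\<in>I. complex_of_real ((d a)\<^sup>2) * theta (h a) ^ n))
      (at_top \<times>\<^sub>F at_right 0)"
proof -
  define F :: "(real \<times> real) filter" where "F = (at_top \<times>\<^sub>F at_right (0::real))"
  define E1 where "E1 = h one - c / 24"
  define ex where "ex \<tau> = exp (- (2 * pi * \<i> * \<tau> * complex_of_real E1))" for \<tau>
  have gen: "((\<lambda>p. chi b (\<tau> p) * ex (\<tau> p)) \<longlongrightarrow> (if b = one then 1 else 0)) F"
    if lim: "filterlim (\<lambda>p. Im (\<tau> p)) at_top F" and b: "b \<in> I" for \<tau> :: "real \<times> real \<Rightarrow> complex" and b
  proof (cases "b = one")
    case True
    have "((\<lambda>p. chi one (\<tau> p) * exp (- (2 * pi * \<i> * \<tau> p * complex_of_real (h one - c / 24)))) \<longlongrightarrow> of_nat (N one 0)) F"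
      by (rule qexp_limit[where e = "h one - c / 24", OF chi_abs[OF oneI] chi_exp[OF oneI] lim])
    then show ?thesis using True N_one0 by (simp add: ex_def E1_def)
  next
    case False
    have "E1 < h b - c / 24" using h_pos[OF b False] h_one by (simp add: E1_def)
    from qexp_limit_zero[where e = "h b - c / 24", OF chi_abs[OF b] chi_exp[OF b] lim this]
    show ?thesis using False by (simp add: ex_def)
  qed
  have gensum: "((\<lambda>p. \<Sum>b\<in>I. M b * (chi b (\<tau> p) * ex (\<tau> p))) \<longlongrightarrow> M one) F"
    if lim: "filterlim (\<lambda>p. Im (\<tau> p)) at_top F" for \<tau> :: "real \<times> real \<Rightarrow> complex" and M
  proof -
    have "((\<lambda>p. \<Sum>b\<in>I. M b * (chi b (\<tau> p) * ex (\<tau> p))) \<longlongrightarrow> (\<Sum>b\<in>I. M b * (if b = one then 1 else 0))) F"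
      by (intro tendsto_sum tendsto_mult_left gen[OF lim])
    moreover have "(\<Sum>b\<in>I. M b * (if b = one then 1 else 0)) = M one"
      using finI oneI by (simp add: if_distrib cong: if_cong)
    ultimately show ?thesis by simp
  qed
  have fstlim: "filterlim fst at_top F" unfolding F_def by (rule filterlim_fst)
  have sndlim: "filterlim snd (at_right 0) F" unfolding F_def by (rule filterlim_snd)
  have invlim: "filterlim (\<lambda>p. inverse (snd p)) at_top F"
    using filterlim_compose[OF filterlim_inverse_at_top_right sndlim] .
  have ypos: "\<forall>\<^sub>F p in F. snd p > 0"
    using eventually_compose_filterlim[OF eventually_at_right_less sndlim] by simp
  have npos: "real n > 0" using n_pos by simp
  define tA where "tA p = \<i> * complex_of_real (fst p) + 1 / of_nat n" for p :: "real \<times> real"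
  define tB where "tB p = \<i> * complex_of_real (fst p)" for p :: "real \<times> real"
  define tD where "tD p = \<i> * complex_of_real (1 / snd p)" for p :: "real \<times> real"
  define tC where "tC p = 1 / of_nat n + \<i> * complex_of_real (1 / (real n ^ 2 * snd p))" for p :: "real \<times> real"
  define gA where "gA = (\<lambda>p. chi one (tA p) * ex (tA p))"
  define gB where "gB = (\<lambda>p. chi one (tB p) * ex (tB p))"
  define gD where "gD = (\<lambda>p. chi one (\<i> * complex_of_real (snd p)) * ex (tD p))"
  define gC where "gC = (\<lambda>p. chi one (\<i> * complex_of_real (snd p) - 1 / of_nat n) * ex (tC p))"
  define Tn where "Tn b = exp (2 * pi * \<i> * complex_of_real (h b - c / 24)) ^ n" for b
  define K where "K = (\<Sum>b\<in>I. S one b * (Tn b * S b one))"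
  have limA: "(gA \<longlongrightarrow> 1) F"
  proof -
    have "filterlim (\<lambda>p. Im (tA p)) at_top F" using fstlim by (simp add: tA_def)
    from gen[OF this oneI] show ?thesis by (simp add: gA_def)
  qed
  have limB: "(gB \<longlongrightarrow> 1) F"
  proof -
    have "filterlim (\<lambda>p. Im (tB p)) at_top F" using fstlim by (simp add: tB_def)
    from gen[OF this oneI] show ?thesis by (simp add: gB_def)
  qed
  have limD: "(gD \<longlongrightarrow> S one one) F"
  proof -
    have "(\<lambda>p. Im (tD p)) = (\<lambda>p. inverse (snd p))"
      unfolding tD_def Im_i_times Re_complex_of_real by (simp add: divide_inverse)
    then have l: "filterlim (\<lambda>p. Im (tD p)) at_top F" using invlim by simp
    have "\<forall>\<^sub>F p in F. (\<Sum>b\<in>I. S one b * (chi b (tD p) * ex (tD p))) = gD p"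
      using ypos
    proof eventually_elim
      case (elim p)
      have "Im (tD p) > 0" using elim by (simp add: tD_def)
      from S_trans[OF oneI this]
      have "chi one (- 1 / tD p) = (\<Sum>b\<in>I. S one b * chi b (tD p))" .
      moreover have "- 1 / tD p = \<i> * complex_of_real (snd p)"
        using elim by (simp add: tD_def field_simps)
      ultimately show ?case
        by (simp add: gD_def sum_distrib_right mult.assoc)
    qed
    from Lim_transform_eventually[OF gensum[OF l] this] show ?thesis .
  qed
  have limC: "(gC \<longlongrightarrow> K) F"
  proof -
    have l: "filterlim (\<lambda>p. Im (tC p)) at_top F"
    proof -
      have "filterlim (\<lambda>p. (1 / real n ^ 2) * inverse (snd p)) at_top F"
        by (rule filterlim_tendsto_pos_mult_at_top[OF tendsto_const _ invlim]) (use npos in simp)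
      moreover have "(\<lambda>p. Im (tC p)) = (\<lambda>p. (1 / real n ^ 2) * inverse (snd p))"
        unfolding tC_def plus_complex.sel Im_i_times Re_complex_of_real by (simp add: divide_inverse)
      ultimately show ?thesis by simp
    qed
    have "\<forall>\<^sub>F p in F. (\<Sum>b\<in>I. S one b * (Tn b * (\<Sum>c\<in>I. S b c * (chi c (tC p) * ex (tC p))))) = gC p"
      using ypos
    proof eventually_elim
      case (elim p)
      define y where "y = snd p"
      have y: "y > 0" using elim by (simp add: y_def)
      have u: "tC p = 1 / of_nat n + \<i> * complex_of_real (1 / (real n ^ 2 * y))" by (simp add: tC_def y_def)
      have imu: "Im (tC p) > 0" using y npos by (simp add: u)
      have imu': "Im (- 1 / tC p) > 0"
        by (rule Im_neg_inv_pos[OF imu])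
      define w where "w = - 1 / tC p + of_nat n"
      have imw: "Im w > 0" using imu' by (simp add: w_def)
      have wz: "- 1 / w = \<i> * complex_of_real y - 1 / of_nat n"
      proof -
        define z where "z = \<i> * complex_of_real y - 1 / of_nat n"
        have z0: "z \<noteq> 0" unfolding z_def using y by (auto simp: complex_eq_iff)
        have uu: "1 / of_nat n + \<i> * complex_of_real (1 / (real n ^ 2 * y)) = z / (of_nat n * z + 1)"
        proof -
          have a: "of_nat n * z + 1 = \<i> * of_nat n * of_real y" unfolding z_def using n_pos by (simp add: field_simps)
          show ?thesis unfolding a unfolding z_def using n_pos y
            by (simp add: field_simps power2_eq_square)
        qed
        have nz1: "of_nat n * z + 1 \<noteq> 0" unfolding z_def using n_pos y by (simp add: complex_eq_iff)
        show ?thesis unfolding w_def u uu unfolding z_def[symmetric] using z0 nz1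
          by (simp add: field_simps)
      qed
      have "chi one (- 1 / w) = (\<Sum>b\<in>I. S one b * chi b w)" by (rule S_trans[OF oneI imw])
      also have "\<dots> = (\<Sum>b\<in>I. S one b * (Tn b * (\<Sum>c\<in>I. S b c * chi c (tC p))))"
      proof (rule sum.cong[OF refl])
        fix b assume b: "b \<in> I"
        have "chi b w = Tn b * chi b (- 1 / tC p)"
          unfolding w_def Tn_def by (rule T_iter[where chi = "chi b", OF T_trans[OF b] imu'])
        also have "chi b (- 1 / tC p) = (\<Sum>c\<in>I. S b c * chi c (tC p))" by (rule S_trans[OF b imu])
        finally show "S one b * chi b w = S one b * (Tn b * (\<Sum>c\<in>I. S b c * chi c (tC p)))" by simp
      qed
      finally have "chi one (\<i> * complex_of_real (snd p) - 1 / of_nat n) = (\<Sum>b\<in>I. S one b * (Tn b * (\<Sum>c\<in>I. S b c * chi c (tC p))))"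
        using wz by (simp add: y_def)
      then show ?case
        by (simp add: gC_def sum_distrib_right sum_distrib_left mult.assoc)
    qed
    moreover have "((\<lambda>p. \<Sum>b\<in>I. S one b * (Tn b * (\<Sum>c\<in>I. S b c * (chi c (tC p) * ex (tC p))))) \<longlongrightarrow> K) F"
      unfolding K_def by (intro tendsto_sum tendsto_mult_left gensum[OF l])
    ultimately show ?thesis using Lim_transform_eventually by blast
  qed
  define D2 where "D2 = (\<Sum>b\<in>I. (d b)\<^sup>2)"
  have D2pos: "D2 > 0"
  proof -
    have "(d one)\<^sup>2 \<le> D2" unfolding D2_def
      by (rule member_le_sum) (use finI oneI in auto)
    moreover have "(d one)\<^sup>2 > 0" using d_pos[OF oneI] by simp
    ultimately show ?thesis by linarith
  qed
  have S11: "S one one = complex_of_real (d one / sqrt D2)" using S_col[OF oneI] by (simp add: D2_def)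
  have S11nz: "S one one \<noteq> 0" using S11 d_pos[OF oneI] D2pos by simp
  define s where "s = (\<Sum>a\<in>I. complex_of_real ((d a)\<^sup>2) * theta (h a) ^ n)"
  define om where "om = exp (2 * pi * \<i> * complex_of_real E1 * (2 / of_nat n))"
  define \<alpha> where "\<alpha> = om * exp (2 * pi * \<i> * complex_of_real (- c / 24)) ^ n"
  define r where "r = 1 / (D2 * (d one / sqrt D2))"
  define L where "L = \<alpha> * s * complex_of_real r"
  define R where "R y = exp (2 * pi * E1 * (1 / y - 1 / (real n ^ 2 * y)))" for y
  define W where "W p = gA p * gC p / (gB p * gD p) * om" for p
  have rpos: "r > 0" using D2pos d_pos[OF oneI] by (simp add: r_def)
  have alpha_eq: "\<alpha> = exp (- 2 * pi * \<i> * complex_of_real ((2 / real n + real n) * c / 24))"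
  proof -
    have "\<alpha> = exp (2 * pi * \<i> * complex_of_real E1 * (2 / of_nat n) + of_nat n * (2 * pi * \<i> * complex_of_real (- c / 24)))"
      unfolding \<alpha>_def om_def by (simp only: exp_of_nat_mult[symmetric] exp_add[symmetric])
    also have "2 * pi * \<i> * complex_of_real E1 * (2 / of_nat n) + of_nat n * (2 * pi * \<i> * complex_of_real (- c / 24))
        = - 2 * pi * \<i> * complex_of_real ((2 / real n + real n) * c / 24)"
      by (simp add: E1_def h_one algebra_simps)
    finally show ?thesis .
  qed
  have alpha_norm: "cmod \<alpha> = 1" unfolding alpha_eq by (simp add: norm_exp_eq_Re)
  have Lnz: "L \<noteq> 0" using alpha_norm nonzero rpos by (auto simp: L_def s_def)
  have Kform: "K = (\<Sum>b\<in>I. complex_of_real ((d b)\<^sup>2 / D2) * (theta (h b) ^ n * exp (2 * pi * \<i> * complex_of_real (- c / 24)) ^ n))"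
    unfolding K_def
  proof (rule sum.cong[OF refl])
    fix b assume b: "b \<in> I"
    have e1: "S one b * S b one = complex_of_real ((d b / sqrt D2) * (d b / sqrt D2))"
      using S_col[OF b] S_row[OF b] unfolding D2_def of_real_mult by simp
    have e2: "(d b / sqrt D2) * (d b / sqrt D2) = (d b)\<^sup>2 / D2"
      using D2pos by (simp add: power2_eq_square[symmetric] power_divide)
    have "S one b * S b one = complex_of_real ((d b)\<^sup>2 / D2)" using e1 e2 by (simp only:)
    moreover have "Tn b = theta (h b) ^ n * exp (2 * pi * \<i> * complex_of_real (- c / 24)) ^ n"
      unfolding Tn_def theta_def power_mult_distrib[symmetric] exp_add[symmetric]
      by (simp add: algebra_simps)
    ultimately show "S one b * (Tn b * S b one) = complex_of_real ((d b)\<^sup>2 / D2) * (theta (h b) ^ n * exp (2 * pi * \<i> * complex_of_real (- c / 24)) ^ n)"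
      by (metis mult.assoc mult.commute)
  qed
  have KL: "K / S one one * om = L"
  proof -
    have "K = s * exp (2 * pi * \<i> * complex_of_real (- c / 24)) ^ n / complex_of_real D2"
      unfolding Kform s_def sum_distrib_right sum_divide_distrib
      by (rule sum.cong[OF refl]) (use D2pos in \<open>simp add: field_simps\<close>)
    then show ?thesis unfolding L_def \<alpha>_def r_def S11 using D2pos d_pos[OF oneI]
      by (simp add: field_simps)
  qed
  have Wlim: "(W \<longlongrightarrow> L) F"
  proof -
    have "(W \<longlongrightarrow> 1 * K / (1 * S one one) * om) F"
      unfolding W_def using S11nz by (intro tendsto_intros limA limB limC limD) simp
    then show ?thesis using KL by simp
  qed
  have Teq: "T1 (chi one) n (fst p) (snd p) = W p * complex_of_real (R (snd p))" for p
  proof -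
    define y where "y = snd p"
    have split: "chi one t = (chi one t * ex s') * exp (2 * pi * \<i> * s' * complex_of_real E1)" for t s'
      by (simp add: ex_def mult.assoc exp_add[symmetric])
    define eA where "eA = exp (2 * pi * \<i> * tA p * complex_of_real E1)"
    define eB where "eB = exp (2 * pi * \<i> * tB p * complex_of_real E1)"
    define eC where "eC = exp (2 * pi * \<i> * tC p * complex_of_real E1)"
    define eD where "eD = exp (2 * pi * \<i> * tD p * complex_of_real E1)"
    have "T1 (chi one) n (fst p) (snd p) = (gA p * eA) * (gC p * eC) / ((gB p * eB) * (gD p * eD))"
      unfolding T1_def gA_def gB_def gC_def gD_def eA_def eB_def eC_def eD_def
      by (subst (1 2 3 4) split) (simp add: tA_def tB_def)
    also have "\<dots> = gA p * gC p / (gB p * gD p) * (eA * eC / (eB * eD))"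
      by (simp add: divide_inverse inverse_mult_distrib mult_ac)
    also have "eA * eC / (eB * eD) = om * complex_of_real (R y)"
    proof -
      have "eA * eC / (eB * eD) = exp (2 * pi * \<i> * tA p * complex_of_real E1 + 2 * pi * \<i> * tC p * complex_of_real E1
          - (2 * pi * \<i> * tB p * complex_of_real E1 + 2 * pi * \<i> * tD p * complex_of_real E1))"
        unfolding eA_def eB_def eC_def eD_def by (simp add: exp_add exp_diff)
      also have "2 * pi * \<i> * tA p * complex_of_real E1 + 2 * pi * \<i> * tC p * complex_of_real E1
          - (2 * pi * \<i> * tB p * complex_of_real E1 + 2 * pi * \<i> * tD p * complex_of_real E1)
          = 2 * pi * \<i> * complex_of_real E1 * (2 / of_nat n) + complex_of_real (2 * pi * E1 * (1 / y - 1 / (real n ^ 2 * y)))"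
        unfolding tA_def tB_def tC_def tD_def y_def by (simp add: algebra_simps)
      finally show ?thesis unfolding om_def R_def by (simp only: exp_of_real[symmetric] exp_add)
    qed
    finally show ?thesis unfolding W_def y_def by (simp add: mult_ac)
  qed
  have Rpos: "R y > 0" for y by (simp add: R_def)
  have ev: "\<forall>\<^sub>F p in F. T1 (chi one) n (fst p) (snd p) \<noteq> 0"
    using tendsto_imp_eventually_ne[OF Wlim Lnz]
    by eventually_elim (use Rpos in \<open>simp add: Teq less_imp_neq[symmetric]\<close>)
  have ph: "((\<lambda>p. phase (T1 (chi one) n (fst p) (snd p))) \<longlongrightarrow> phase L) F"
  proof -
    have "(\<lambda>p. phase (T1 (chi one) n (fst p) (snd p))) = (\<lambda>p. phase (W p))"
      by (simp add: Teq phase_real_pos[OF Rpos])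
    then show ?thesis using phase_tendsto[OF Wlim Lnz] by simp
  qed
  have "phase L = \<alpha> * phase s" unfolding L_def by (rule phase_scale[OF rpos alpha_norm])
  then show ?thesis using ev ph unfolding F_def alpha_eq s_def by simp
qed

end
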